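(* Let $N\in\mathbb{N}$ and $m,m'\in\mathrm{Ran}[m_N]$. Then \[ w_1(\mu_{\mathrm{MC}}^{m;N},\mu_{\mathrm{MC}}^{m';N};N)=|m'-m|. \]
   Context: $\Lambda$ is a finite lattice with $N=|\Lambda|$ sites (identified with $[N]$), $\mathcal{S}=\{-1,1\}^\Lambda\subset\mathbb{R}^N$, $M[\phi]=\sum_{x}\phi(x)$, $m_N=M/N$, $\mathrm{Ran}[m_N]$ its range. For $m\in\mathrm{Ran}[m_N]$, $\mu_{\mathrm{MC}}^{m;N}$ is the uniform probability measure on $\mathcal{S}_m=\{\phi\in\mathcal{S}:m_N[\phi]=m\}$. The specific $1$-norm fluctuation distance is $w_1(\mu_1,\mu_2;N)=\inf_\gamma\int\gamma(d\phi,d\phi')\frac1N\sum_{x}|\phi(x)-\phi'(x)|$, the infimum over all couplings of $\mu_1,\mu_2$. *)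

theory Defs
  imports "HOL-Probability.Probability" "HOL-Library.FuncSet"
begin

text \<open>Lattice sites are identified with {..<N}; spin configurations are elements of
  {-1,1}^{..<N}, represented as extensional functions (PiE).\<close>

definition spins :: "nat \<Rightarrow> (nat \<Rightarrow> real) set" where
  "spins N = PiE {..<N} (\<lambda>_. {-1, 1})"

definition magnetization :: "nat \<Rightarrow> (nat \<Rightarrow> real) \<Rightarrow> real" where
  "magnetization N \<phi> = (\<Sum>x<N. \<phi> x)"

definition mN :: "nat \<Rightarrow> (nat \<Rightarrow> real) \<Rightarrow> real" where
  "mN N \<phi> = magnetization N \<phi> / real N"

definition RanmN :: "nat \<Rightarrow> real set" where
  "RanmN N = mN N ` spins N"

definition spins_m :: "nat \<Rightarrow> real \<Rightarrow> (nat \<Rightarrow> real) set" where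
  "spins_m N m = {\<phi> \<in> spins N. mN N \<phi> = m}"

definition mu_MC :: "nat \<Rightarrow> real \<Rightarrow> (nat \<Rightarrow> real) pmf" where
  "mu_MC N m = pmf_of_set (spins_m N m)"

definition is_coupling :: "('a \<times> 'a) pmf \<Rightarrow> 'a pmf \<Rightarrow> 'a pmf \<Rightarrow> bool" where
  "is_coupling \<gamma> \<mu>1 \<mu>2 \<longleftrightarrow> map_pmf fst \<gamma> = \<mu>1 \<and> map_pmf snd \<gamma> = \<mu>2"

definition w1 :: "(nat \<Rightarrow> real) pmf \<Rightarrow> (nat \<Rightarrow> real) pmf \<Rightarrow> nat \<Rightarrow> real" where
  "w1 \<mu>1 \<mu>2 N = Inf {measure_pmf.expectation \<gamma>
        (\<lambda>(\<phi>, \<phi>'). (1 / real N) * (\<Sum>x<N. \<bar>\<phi> x - \<phi>' x\<bar>)) | \<gamma>. is_coupling \<gamma> \<mu>1 \<mu>2}"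

end

theory Submission
  imports Defs
begin

definition toS :: "nat \<Rightarrow> nat set \<Rightarrow> nat \<Rightarrow> real" where
  "toS N A = (\<lambda>x. if x \<in> A then 1 else if x < N then -1 else undefined)"

definition Sk :: "nat \<Rightarrow> nat \<Rightarrow> nat set set" where
  "Sk N k = {A. A \<subseteq> {..<N} \<and> card A = k}"

lemma toS_spins: "A \<subseteq> {..<N} \<Longrightarrow> toS N A \<in> spins N"
  unfolding spins_def toS_def PiE_def extensional_def by auto

lemma spins_toS: assumes "\<phi> \<in> spins N" shows "\<phi> = toS N {x. x < N \<and> \<phi> x = 1}"
proof
  fix x show "\<phi> x = toS N {x. x < N \<and> \<phi> x = 1} x"
    using assms unfolding spins_def toS_def PiE_def extensional_def by (cases "x < N") auto
qed

lemma toS_inj: "inj_on (toS N) (Pow {..<N})"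
proof (rule inj_onI)
  fix A B assume A: "A \<in> Pow {..<N}" and B: "B \<in> Pow {..<N}" and e: "toS N A = toS N B"
  show "A = B"
  proof (rule set_eqI)
    fix x
    have "x \<in> A \<longleftrightarrow> x < N \<and> toS N A x = 1" using A by (auto simp: toS_def)
    moreover have "x \<in> B \<longleftrightarrow> x < N \<and> toS N B x = 1" using B by (auto simp: toS_def)
    ultimately show "x \<in> A \<longleftrightarrow> x \<in> B" using e by simp
  qed
qed

lemma mag_toS: assumes "A \<subseteq> {..<N}" shows "magnetization N (toS N A) = 2 * real (card A) - real N"
proof -
  have "magnetization N (toS N A) = (\<Sum>x<N. (if x \<in> A then 1 else -1 :: real))"
    unfolding magnetization_def toS_def by (rule sum.cong) auto
  also have "\<dots> = (\<Sum>x\<in>A. 1) + (\<Sum>x\<in>{..<N}-A. -1 :: real)"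
    using assms apply (simp add: sum.If_cases Int_absorb1)
    by (rule arg_cong[where f=card]) auto
  also have "\<dots> = real (card A) - real (N - card A)"
    using assms by (simp add: card_Diff_subset finite_subset)
  also have "\<dots> = 2 * real (card A) - real N"
    using assms card_mono[OF _ assms] by (simp add: of_nat_diff)
  finally show ?thesis .
qed

lemma mN_toS: "A \<subseteq> {..<N} \<Longrightarrow> mN N (toS N A) = (2 * real (card A) - real N) / real N"
  by (simp add: mN_def mag_toS)

lemma card_le_N: "A \<subseteq> {..<N} \<Longrightarrow> card A \<le> N"
  using card_mono[of "{..<N}" A] by simp

lemma spins_m_eq:
  assumes "m \<in> RanmN N"
  obtains k where "k \<le> N" "spins_m N m = toS N ` Sk N k"
proof -
  obtain \<phi>0 where p0: "\<phi>0 \<in> spins N" "m = mN N \<phi>0" using assms unfolding RanmN_def by auto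
  define A0 where "A0 = {x. x < N \<and> \<phi>0 x = 1}"
  have A0: "A0 \<subseteq> {..<N}" unfolding A0_def by auto
  have m: "m = (2 * real (card A0) - real N) / real N"
    using p0 spins_toS[OF p0(1)] mN_toS[OF A0] unfolding A0_def by metis
  have key: "mN N (toS N A) = m \<longleftrightarrow> card A = card A0" if A: "A \<subseteq> {..<N}" for A
  proof (cases "N = 0")
    case True then show ?thesis using A A0 by (simp add: mN_toS m)
  next
    case False
    then show ?thesis using A by (simp add: mN_toS m divide_cancel_right)
  qed
  show ?thesis
  proof (rule that[of "card A0"])
    show "card A0 \<le> N" using card_le_N[OF A0] .
    show "spins_m N m = toS N ` Sk N (card A0)"
    proof
      show "spins_m N m \<subseteq> toS N ` Sk N (card A0)"
      proof
        fix \<phi> assume "\<phi> \<in> spins_m N m"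
        then have p: "\<phi> \<in> spins N" "mN N \<phi> = m" unfolding spins_m_def by auto
        define A where "A = {x. x < N \<and> \<phi> x = 1}"
        have A: "A \<subseteq> {..<N}" unfolding A_def by auto
        have e: "\<phi> = toS N A" using spins_toS[OF p(1)] unfolding A_def .
        then have "card A = card A0" using key[OF A] p(2) by simp
        then show "\<phi> \<in> toS N ` Sk N (card A0)" using e A unfolding Sk_def by auto
      qed
      show "toS N ` Sk N (card A0) \<subseteq> spins_m N m"
        using key toS_spins unfolding Sk_def spins_m_def by auto
    qed
  qed
qed

lemma marg:
  assumes fin: "finite Q" and ne: "Q \<noteq> {}"
    and c: "\<And>a. a \<in> f ` Q \<Longrightarrow> card {q\<in>Q. f q = a} = c"
  shows "map_pmf f (pmf_of_set Q) = pmf_of_set (f ` Q)"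
proof -
  have Qu: "Q = (\<Union>a\<in>f ` Q. {q\<in>Q. f q = a})" by auto
  have "card Q = (\<Sum>a\<in>f ` Q. card {q\<in>Q. f q = a})"
    by (subst Qu, rule card_UN_disjoint) (use fin in auto)
  also have "\<dots> = c * card (f ` Q)" using c by simp
  finally have cQ: "card Q = c * card (f ` Q)" .
  have cpos: "c > 0"
  proof -
    obtain q where "q \<in> Q" using ne by auto
    then have "card {q'\<in>Q. f q' = f q} = c" using c by auto
    moreover have "{q'\<in>Q. f q' = f q} \<noteq> {}" using \<open>q \<in> Q\<close> by auto
    moreover have "finite {q'\<in>Q. f q' = f q}" using fin by auto
    ultimately show ?thesis by (metis card_gt_0_iff)
  qed
  show ?thesis
  proof (rule pmf_eqI)
    fix a
    have "pmf (map_pmf f (pmf_of_set Q)) a = card (Q \<inter> f -` {a}) / card Q"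
      by (simp add: pmf_map measure_pmf_of_set fin ne)
    also have "Q \<inter> f -` {a} = {q\<in>Q. f q = a}" by auto
    finally have e: "pmf (map_pmf f (pmf_of_set Q)) a = card {q\<in>Q. f q = a} / card Q" .
    show "pmf (map_pmf f (pmf_of_set Q)) a = pmf (pmf_of_set (f ` Q)) a"
    proof (cases "a \<in> f ` Q")
      case True
      then show ?thesis using e c[OF True] cQ cpos fin ne by (simp add: indicator_def)
    next
      case False
      then have "{q\<in>Q. f q = a} = {}" by auto
      then show ?thesis using e False fin ne by (simp add: indicator_def)
    qed
  qed
qed

lemma Sk_fin: "finite (Sk N k)"
  by (rule finite_subset[of _ "Pow {..<N}"]) (auto simp: Sk_def)

lemma Sk_ne: "k \<le> N \<Longrightarrow> Sk N k \<noteq> {}"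
  using obtain_subset_with_card_n[of k "{..<N}"] unfolding Sk_def by auto

lemma set_coupling:
  assumes kk: "k \<le> k'" "k' \<le> N"
  defines "Q \<equiv> {(A,B). A \<subseteq> B \<and> B \<subseteq> {..<N} \<and> card A = k \<and> card B = k'}"
  shows "map_pmf fst (pmf_of_set Q) = pmf_of_set (Sk N k)"
    "map_pmf snd (pmf_of_set Q) = pmf_of_set (Sk N k')"
    "finite Q" "Q \<noteq> {}"
proof -
  show finQ: "finite Q"
    by (rule finite_subset[of _ "Pow {..<N} \<times> Pow {..<N}"]) (auto simp: Q_def)
  have fstQ: "fst ` Q = Sk N k"
  proof
    show "fst ` Q \<subseteq> Sk N k" unfolding Q_def Sk_def by auto
    show "Sk N k \<subseteq> fst ` Q"
    proof
      fix A assume "A \<in> Sk N k"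
      then have A: "A \<subseteq> {..<N}" "card A = k" unfolding Sk_def by auto
      have fA: "finite A" using A(1) finite_subset by blast
      have "card ({..<N} - A) = N - k" using A fA by (simp add: card_Diff_subset)
      then obtain C where C: "C \<subseteq> {..<N} - A" "card C = k' - k"
        using obtain_subset_with_card_n[of "k'-k" "{..<N} - A"] kk by (metis diff_le_mono)
      have fC: "finite C" using C(1) finite_subset by blast
      have "card (A \<union> C) = k'" using C A fA fC kk by (subst card_Un_disjoint) auto
      then have "(A, A \<union> C) \<in> Q" using A C unfolding Q_def by auto
      then show "A \<in> fst ` Q" by force
    qed
  qed
  have sndQ: "snd ` Q = Sk N k'"
  proof
    show "snd ` Q \<subseteq> Sk N k'" unfolding Q_def Sk_def by auto
    show "Sk N k' \<subseteq> snd ` Q"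
    proof
      fix B assume "B \<in> Sk N k'"
      then have B: "B \<subseteq> {..<N}" "card B = k'" unfolding Sk_def by auto
      then obtain A where A: "A \<subseteq> B" "card A = k"
        using obtain_subset_with_card_n[of k B] kk by auto
      then have "(A, B) \<in> Q" using B unfolding Q_def by auto
      then show "B \<in> snd ` Q" by force
    qed
  qed
  show neQ: "Q \<noteq> {}" using fstQ Sk_ne[of k N] kk by auto
  have "map_pmf fst (pmf_of_set Q) = pmf_of_set (fst ` Q)"
  proof (rule marg[OF finQ neQ, where c="(N-k) choose (k'-k)"])
    fix A assume "A \<in> fst ` Q"
    then have A: "A \<subseteq> {..<N}" "card A = k" using fstQ unfolding Sk_def by auto
    have fA: "finite A" using A(1) finite_subset by blast
    have "{q\<in>Q. fst q = A} = Pair A ` {B. A \<subseteq> B \<and> B \<subseteq> {..<N} \<and> card B = k'}"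
      using A unfolding Q_def by (intro set_eqI, case_tac x) auto
    then have "card {q\<in>Q. fst q = A} = card {B. A \<subseteq> B \<and> B \<subseteq> {..<N} \<and> card B = k'}"
      by (simp add: card_image inj_on_def)
    also have "{B. A \<subseteq> B \<and> B \<subseteq> {..<N} \<and> card B = k'} =
        (\<lambda>C. A \<union> C) ` {C. C \<subseteq> {..<N} - A \<and> card C = k' - k}"
    proof
      show "(\<lambda>C. A \<union> C) ` {C. C \<subseteq> {..<N} - A \<and> card C = k' - k} \<subseteq> {B. A \<subseteq> B \<and> B \<subseteq> {..<N} \<and> card B = k'}"
      proof clarify
        fix C assume C: "C \<subseteq> {..<N} - A" "card C = k' - k"
        have fC: "finite C" using C(1) finite_subset by blast
        have "card (A \<union> C) = k'" using C A fA fC kk by (subst card_Un_disjoint) auto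
        then show "A \<subseteq> A \<union> C \<and> A \<union> C \<subseteq> {..<N} \<and> card (A \<union> C) = k'" using A C by auto
      qed
      show "{B. A \<subseteq> B \<and> B \<subseteq> {..<N} \<and> card B = k'} \<subseteq> (\<lambda>C. A \<union> C) ` {C. C \<subseteq> {..<N} - A \<and> card C = k' - k}"
      proof (rule subsetI)
        fix B assume "B \<in> {B. A \<subseteq> B \<and> B \<subseteq> {..<N} \<and> card B = k'}"
        then have B: "A \<subseteq> B" "B \<subseteq> {..<N}" "card B = k'" by auto
        have fB: "finite B" using B(2) finite_subset by blast
        have "B = A \<union> (B - A)" using B by auto
        moreover have "card (B - A) = k' - k" using B A fB fA card_Diff_subset[OF fA B(1)] by simp
        ultimately show "B \<in> (\<lambda>C. A \<union> C) ` {C. C \<subseteq> {..<N} - A \<and> card C = k' - k}"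
          using B by blast
      qed
    qed
    also have "card \<dots> = card {C. C \<subseteq> {..<N} - A \<and> card C = k' - k}"
      by (rule card_image) (auto simp: inj_on_def)
    also have "\<dots> = card ({..<N} - A) choose (k' - k)" by (rule n_subsets) simp
    also have "card ({..<N} - A) = N - k" using A fA by (simp add: card_Diff_subset)
    finally show "card {q\<in>Q. fst q = A} = (N - k) choose (k' - k)" .
  qed
  then show "map_pmf fst (pmf_of_set Q) = pmf_of_set (Sk N k)" using fstQ by simp
  have "map_pmf snd (pmf_of_set Q) = pmf_of_set (snd ` Q)"
  proof (rule marg[OF finQ neQ, where c="k' choose k"])
    fix B assume "B \<in> snd ` Q"
    then have B: "B \<subseteq> {..<N}" "card B = k'" using sndQ unfolding Sk_def by auto
    have fB: "finite B" using B(1) finite_subset by blast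
    have "{q\<in>Q. snd q = B} = (\<lambda>A. (A, B)) ` {A. A \<subseteq> B \<and> card A = k}"
      using B unfolding Q_def by (intro set_eqI, case_tac x) auto
    then have "card {q\<in>Q. snd q = B} = card {A. A \<subseteq> B \<and> card A = k}"
      by (simp add: card_image inj_on_def)
    also have "\<dots> = k' choose k" using n_subsets[OF fB] B by simp
    finally show "card {q\<in>Q. snd q = B} = k' choose k" .
  qed
  then show "map_pmf snd (pmf_of_set Q) = pmf_of_set (Sk N k')" using sndQ by simp
qed

lemma spin_coupling:
  assumes kk: "k \<le> k'" "k' \<le> N"
  shows "\<exists>\<gamma>. is_coupling \<gamma> (pmf_of_set (toS N ` Sk N k)) (pmf_of_set (toS N ` Sk N k'))
     \<and> (\<forall>p\<in>set_pmf \<gamma>. \<forall>x<N. fst p x \<le> snd p x)"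
proof -
  define Q where "Q = {(A,B). A \<subseteq> B \<and> B \<subseteq> {..<N} \<and> card A = k \<and> card B = k'}"
  note sc = set_coupling[OF kk, folded Q_def]
  define \<gamma> where "\<gamma> = map_pmf (\<lambda>(A,B). (toS N A, toS N B)) (pmf_of_set Q)"
  have inj: "inj_on (toS N) (Sk N j)" for j
    by (rule inj_on_subset[OF toS_inj]) (auto simp: Sk_def)
  have "map_pmf fst \<gamma> = map_pmf (toS N) (map_pmf fst (pmf_of_set Q))"
    unfolding \<gamma>_def map_pmf_comp by (rule map_pmf_cong) auto
  also have "\<dots> = pmf_of_set (toS N ` Sk N k)"
    using sc(1) map_pmf_of_set_inj[OF inj Sk_ne Sk_fin] kk by simp
  finally have 1: "map_pmf fst \<gamma> = pmf_of_set (toS N ` Sk N k)" .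
  have "map_pmf snd \<gamma> = map_pmf (toS N) (map_pmf snd (pmf_of_set Q))"
    unfolding \<gamma>_def map_pmf_comp by (rule map_pmf_cong) auto
  also have "\<dots> = pmf_of_set (toS N ` Sk N k')"
    using sc(2) map_pmf_of_set_inj[OF inj Sk_ne Sk_fin] kk by simp
  finally have 2: "map_pmf snd \<gamma> = pmf_of_set (toS N ` Sk N k')" .
  have 3: "\<forall>p\<in>set_pmf \<gamma>. \<forall>x<N. fst p x \<le> snd p x"
  proof (intro ballI allI impI)
    fix p x assume p: "p \<in> set_pmf \<gamma>" and x: "x < N"
    then obtain A B where AB: "(A,B) \<in> Q" "p = (toS N A, toS N B)"
      unfolding \<gamma>_def using sc(3,4) by auto
    then have "A \<subseteq> B" unfolding Q_def by auto
    then show "fst p x \<le> snd p x" using AB(2) x unfolding toS_def by auto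
  qed
  show ?thesis using 1 2 3 unfolding is_coupling_def by blast
qed

definition cost :: "nat \<Rightarrow> (nat \<Rightarrow> real) \<times> (nat \<Rightarrow> real) \<Rightarrow> real" where
  "cost N = (\<lambda>(\<phi>, \<phi>'). (1 / real N) * (\<Sum>x<N. \<bar>\<phi> x - \<phi>' x\<bar>))"

lemma cost_ge: "\<bar>mN N \<phi>' - mN N \<phi>\<bar> \<le> cost N (\<phi>, \<phi>')"
proof -
  have "\<bar>mN N \<phi>' - mN N \<phi>\<bar> = \<bar>\<Sum>x<N. \<phi>' x - \<phi> x\<bar> / real N"
    by (simp add: mN_def magnetization_def sum_subtractf diff_divide_distrib[symmetric])
  also have "\<dots> \<le> (\<Sum>x<N. \<bar>\<phi>' x - \<phi> x\<bar>) / real N"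
    by (rule divide_right_mono) (auto intro: sum_abs)
  also have "\<dots> = cost N (\<phi>, \<phi>')" by (simp add: cost_def abs_minus_commute)
  finally show ?thesis .
qed

lemma cost_eq: assumes "\<forall>x<N. \<phi> x \<le> \<phi>' x"
  shows "cost N (\<phi>, \<phi>') = mN N \<phi>' - mN N \<phi>" "mN N \<phi> \<le> mN N \<phi>'"
proof -
  have "cost N (\<phi>, \<phi>') = (\<Sum>x<N. \<phi>' x - \<phi> x) / real N"
    unfolding cost_def using assms by (simp add: divide_inverse mult.commute)
  then show "cost N (\<phi>, \<phi>') = mN N \<phi>' - mN N \<phi>"
    by (simp add: mN_def magnetization_def sum_subtractf diff_divide_distrib)
  have "(\<Sum>x<N. \<phi> x) \<le> (\<Sum>x<N. \<phi>' x)" using assms by (intro sum_mono) auto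
  then show "mN N \<phi> \<le> mN N \<phi>'" unfolding mN_def magnetization_def
    by (rule divide_right_mono) simp
qed

lemma expect_ge:
  assumes "finite (set_pmf \<gamma>)" "\<forall>p\<in>set_pmf \<gamma>. c \<le> f p"
  shows "c \<le> measure_pmf.expectation \<gamma> (f :: _ \<Rightarrow> real)"
  by (rule measure_pmf.integral_ge_const)
     (use assms in \<open>auto simp: integrable_measure_pmf_finite AE_measure_pmf_iff\<close>)

lemma expect_le:
  assumes "finite (set_pmf \<gamma>)" "\<forall>p\<in>set_pmf \<gamma>. f p \<le> c"
  shows "measure_pmf.expectation \<gamma> (f :: _ \<Rightarrow> real) \<le> c"
  by (rule measure_pmf.integral_le_const)
     (use assms in \<open>auto simp: integrable_measure_pmf_finite AE_measure_pmf_iff\<close>)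

theorem theorem3p7:
  fixes N :: nat and m m' :: real
  assumes "m \<in> RanmN N" and "m' \<in> RanmN N"
  shows "w1 (mu_MC N m) (mu_MC N m') N = \<bar>m' - m\<bar>"
proof -
  obtain k where k: "k \<le> N" "spins_m N m = toS N ` Sk N k" using spins_m_eq[OF assms(1)] by blast
  obtain k' where k': "k' \<le> N" "spins_m N m' = toS N ` Sk N k'" using spins_m_eq[OF assms(2)] by blast
  have fin: "finite (spins_m N m)" "finite (spins_m N m')" using k k' Sk_fin by auto
  have ne: "spins_m N m \<noteq> {}" "spins_m N m' \<noteq> {}" using k k' Sk_ne by auto
  have cf: "(\<lambda>(\<phi>, \<phi>'). (1 / real N) * (\<Sum>x<N. \<bar>\<phi> x - \<phi>' x\<bar>)) = cost N"
    unfolding cost_def ..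
  have supp: "set_pmf \<gamma> \<subseteq> spins_m N m \<times> spins_m N m'"
    if "is_coupling \<gamma> (mu_MC N m) (mu_MC N m')" for \<gamma>
  proof
    fix p assume p: "p \<in> set_pmf \<gamma>"
    have "set_pmf (map_pmf fst \<gamma>) = spins_m N m" using that fin ne
      unfolding is_coupling_def mu_MC_def by (metis set_pmf_of_set)
    then have "fst p \<in> spins_m N m" using p by auto
    moreover have "set_pmf (map_pmf snd \<gamma>) = spins_m N m'" using that fin ne
      unfolding is_coupling_def mu_MC_def by (metis set_pmf_of_set)
    then have "snd p \<in> spins_m N m'" using p by auto
    ultimately show "p \<in> spins_m N m \<times> spins_m N m'" by (cases p) auto
  qed
  have finS: "finite (set_pmf \<gamma>)" if "is_coupling \<gamma> (mu_MC N m) (mu_MC N m')" for \<gamma>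
    using supp[OF that] fin by (meson finite_SigmaI finite_subset)
  have lower: "\<bar>m' - m\<bar> \<le> measure_pmf.expectation \<gamma> (cost N)"
    if "is_coupling \<gamma> (mu_MC N m) (mu_MC N m')" for \<gamma>
  proof (rule expect_ge[OF finS[OF that]], rule ballI)
    fix p assume "p \<in> set_pmf \<gamma>"
    then have "fst p \<in> spins_m N m" "snd p \<in> spins_m N m'" using supp[OF that] by auto
    then have "mN N (fst p) = m" "mN N (snd p) = m'" unfolding spins_m_def by auto
    then show "\<bar>m' - m\<bar> \<le> cost N p" using cost_ge[of N "snd p" "fst p"] by (cases p) auto
  qed
  have "\<exists>\<gamma>. is_coupling \<gamma> (mu_MC N m) (mu_MC N m') \<and> measure_pmf.expectation \<gamma> (cost N) \<le> \<bar>m' - m\<bar>"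
  proof (cases "k \<le> k'")
    case True
    then obtain \<gamma> where g: "is_coupling \<gamma> (mu_MC N m) (mu_MC N m')"
        "\<forall>p\<in>set_pmf \<gamma>. \<forall>x<N. fst p x \<le> snd p x"
      using spin_coupling[OF True k'(1)] k k' unfolding mu_MC_def by auto
    have "measure_pmf.expectation \<gamma> (cost N) \<le> \<bar>m' - m\<bar>"
    proof (rule expect_le[OF finS[OF g(1)]], rule ballI)
      fix p assume p: "p \<in> set_pmf \<gamma>"
      then have "fst p \<in> spins_m N m" "snd p \<in> spins_m N m'" using supp[OF g(1)] by auto
      then have "mN N (fst p) = m" "mN N (snd p) = m'" unfolding spins_m_def by auto
      then show "cost N p \<le> \<bar>m' - m\<bar>" using cost_eq[of N "fst p" "snd p"] g(2) p by (cases p) auto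
    qed
    then show ?thesis using g by blast
  next
    case False
    then obtain \<gamma> where g: "is_coupling \<gamma> (mu_MC N m') (mu_MC N m)"
        "\<forall>p\<in>set_pmf \<gamma>. \<forall>x<N. fst p x \<le> snd p x"
      using spin_coupling[of k' k N] k k' unfolding mu_MC_def by auto
    define \<gamma>' where "\<gamma>' = map_pmf prod.swap \<gamma>"
    have g1: "is_coupling \<gamma>' (mu_MC N m) (mu_MC N m')"
      using g(1) unfolding is_coupling_def \<gamma>'_def by (simp add: map_pmf_comp)
    have "measure_pmf.expectation \<gamma>' (cost N) \<le> \<bar>m' - m\<bar>"
    proof (rule expect_le[OF finS[OF g1]], rule ballI)
      fix p assume p: "p \<in> set_pmf \<gamma>'"
      then have "fst p \<in> spins_m N m" "snd p \<in> spins_m N m'" using supp[OF g1] by auto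
      then have "mN N (fst p) = m" "mN N (snd p) = m'" unfolding spins_m_def by auto
      moreover have "\<forall>x<N. snd p x \<le> fst p x" using p g(2) unfolding \<gamma>'_def by auto
      moreover have "cost N p = cost N (snd p, fst p)"
        by (cases p) (simp add: cost_def abs_minus_commute)
      ultimately show "cost N p \<le> \<bar>m' - m\<bar>" using cost_eq[of N "snd p" "fst p"] by auto
    qed
    then show ?thesis using g1 by blast
  qed
  then obtain \<gamma>0 where g0: "is_coupling \<gamma>0 (mu_MC N m) (mu_MC N m')"
      "measure_pmf.expectation \<gamma>0 (cost N) \<le> \<bar>m' - m\<bar>" by blast
  have eq0: "measure_pmf.expectation \<gamma>0 (cost N) = \<bar>m' - m\<bar>" using g0 lower[OF g0(1)] by linarith
  show ?thesis unfolding w1_def cf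
  proof (rule cInf_eq_minimum)
    show "\<bar>m' - m\<bar> \<in> {measure_pmf.expectation \<gamma> (cost N) |\<gamma>. is_coupling \<gamma> (mu_MC N m) (mu_MC N m')}"
      using g0(1) eq0 by force
    fix x assume "x \<in> {measure_pmf.expectation \<gamma> (cost N) |\<gamma>. is_coupling \<gamma> (mu_MC N m) (mu_MC N m')}"
    then show "\<bar>m' - m\<bar> \<le> x" using lower by auto
  qed
qed

end
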